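(* Let $K,L>0$ with $K\sqrt L\ge1$, let $A(p,q)=(p^2q)^{1/3}$ and $A^\delta(p,q)=\operatorname{sgn}(q)\min(\lvert A(p,q)\rvert,K\lvert p\rvert,L\lvert q\rvert)$. Then \[ \left\lvert\frac{d}{dp}A^\delta(p,q)\right\rvert\le K,\qquad\left\lvert\frac{d}{dq}A^\delta(p,q)\right\rvert\le L \] wherever the derivatives exist, and $A^\delta$ is Lipschitz continuous. Moreover, \[ \lvert A^\delta(p,q)-A(p,q)\rvert\le\max\left(\frac{4}{27K^2}\lvert q\rvert,\frac{2}{3\sqrt{3L}}\lvert p\rvert\right)\quad\text{for all }p,q\in\mathbb R. \]
   Context: Real cube root; $\operatorname{sgn}(q)=q/\lvert q\rvert$ for $q\neq0$, $\operatorname{sgn}(0)=0$. *)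

theory Defs
  imports "HOL-Analysis.Analysis"
begin

text \<open>A(p,q) = (p^2 q)^(1/3), real cube root (root 3 is odd, so sign-preserving).\<close>
definition A :: "real \<Rightarrow> real \<Rightarrow> real" where
  "A p q = root 3 (p^2 * q)"

definition Adelta :: "real \<Rightarrow> real \<Rightarrow> real \<Rightarrow> real \<Rightarrow> real" where
  "Adelta K L p q = sgn q * min (\<bar>A p q\<bar>) (min (K * \<bar>p\<bar>) (L * \<bar>q\<bar>))"

end

theory Submission
  imports Defs
begin

definition H :: "real \<Rightarrow> real \<Rightarrow> real \<Rightarrow> real \<Rightarrow> real" where
  "H K L a b = min (a^2*b) (min (K*a^3) (L*b^3))"

lemma root_sgn: "root 3 q = sgn q * root 3 \<bar>q\<bar>"
  by (simp add: real_root_abs sgn_real_def real_root_minus abs_if)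

lemma A_rep: "A p q = sgn q * ((root 3 \<bar>p\<bar>)^2 * root 3 \<bar>q\<bar>)"
proof -
  have "A p q = root 3 (p^2) * root 3 q" by (simp add: A_def real_root_mult)
  also have "root 3 (p^2) = (root 3 \<bar>p\<bar>)^2"
    by (simp add: real_root_power real_root_abs)
  finally show ?thesis by (simp add: root_sgn[of q])
qed

lemma Adelta_rep: "Adelta K L p q = sgn q * H K L (root 3 \<bar>p\<bar>) (root 3 \<bar>q\<bar>)"
proof (cases "q = 0")
  case True thus ?thesis by (simp add: Adelta_def)
next
  case False
  have a: "\<bar>A p q\<bar> = (root 3 \<bar>p\<bar>)^2 * root 3 \<bar>q\<bar>"
    using A_rep[of p q] False by (simp add: abs_mult real_root_ge_zero)
  have p: "\<bar>p\<bar> = (root 3 \<bar>p\<bar>)^3" by simp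
  have q: "\<bar>q\<bar> = (root 3 \<bar>q\<bar>)^3" by simp
  show ?thesis unfolding Adelta_def H_def a by simp
qed

lemma H_mono_a:
  assumes "0 \<le> a'" "a' \<le> a" "0 \<le> b" "0 < K"
  shows "H K L a' b \<le> H K L a b \<and> H K L a b - H K L a' b \<le> K * (a^3 - a'^3)"
proof -
  have m1: "a'^2*b \<le> a^2*b" by (intro mult_right_mono power_mono) (use assms in auto)
  have m2: "K*a'^3 \<le> K*a^3" by (intro mult_left_mono power_mono) (use assms in auto)
  have "H K L a b - H K L a' b \<le> K * (a^3 - a'^3)"
  proof (cases "H K L a' b = L*b^3")
    case True
    have "H K L a b \<le> L*b^3" unfolding H_def by simp
    moreover have "0 \<le> K * (a^3 - a'^3)" using m2 by (simp add: right_diff_distrib)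
    ultimately show ?thesis using True by linarith
  next
    case F1: False
    show ?thesis
    proof (cases "H K L a' b = K*a'^3")
      case True
      have "H K L a b \<le> K*a^3" unfolding H_def by simp
      then show ?thesis using True by (simp add: algebra_simps)
    next
      case F2: False
      then have e: "H K L a' b = a'^2*b" and le: "a'^2*b \<le> K*a'^3" using F1 unfolding H_def by (auto simp: min_def split: if_splits)
      have "H K L a b \<le> a^2*b" unfolding H_def by simp
      moreover have "a^2*b - a'^2*b \<le> K*(a^3-a'^3)"
      proof (cases "a' = 0")
        case True then show ?thesis using e F2 by simp
      next
        case False
        then have "b \<le> K*a'" using le assms
          by (smt (verit) mult.commute mult.left_commute mult_le_cancel_left_pos power2_eq_square power3_eq_cube zero_less_power)
        then have "b*(a-a')*(a+a') \<le> K*a'*(a-a')*(a+a')"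
          using assms by (intro mult_right_mono) auto
        also have "\<dots> = (K*(a-a'))*(a'*(a+a'))" by (simp add: algebra_simps)
        also have "\<dots> \<le> (K*(a-a'))*(a^2+a*a'+a'^2)"
          using assms by (intro mult_left_mono) (auto simp: power2_eq_square algebra_simps)
        finally have X: "b*(a-a')*(a+a') \<le> K*(a-a')*(a^2+a*a'+a'^2)" .
        have e1: "a^2*b - a'^2*b = b*(a-a')*(a+a')" by (simp add: power2_eq_square algebra_simps)
        have e2: "K*(a^3-a'^3) = K*(a-a')*(a^2+a*a'+a'^2)" by (simp add: power2_eq_square power3_eq_cube algebra_simps)
        show ?thesis using X e1 e2 by linarith
      qed
      ultimately show ?thesis using e by linarith
    qed
  qed
  moreover have "H K L a' b \<le> H K L a b" using m1 m2 unfolding H_def by (auto simp: min_def)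
  ultimately show ?thesis by simp
qed

lemma H_mono_b:
  assumes "0 \<le> b'" "b' \<le> b" "0 \<le> a" "0 < L"
  shows "H K L a b' \<le> H K L a b \<and> H K L a b - H K L a b' \<le> L * (b^3 - b'^3)"
proof -
  have m1: "a^2*b' \<le> a^2*b" by (intro mult_left_mono) (use assms in auto)
  have m2: "L*b'^3 \<le> L*b^3" by (intro mult_left_mono power_mono) (use assms in auto)
  have "H K L a b - H K L a b' \<le> L * (b^3 - b'^3)"
  proof (cases "H K L a b' = K*a^3")
    case True
    have "H K L a b \<le> K*a^3" unfolding H_def by simp
    moreover have "0 \<le> L * (b^3 - b'^3)" using m2 by (simp add: right_diff_distrib)
    ultimately show ?thesis using True by linarith
  next
    case F1: False
    show ?thesis
    proof (cases "H K L a b' = L*b'^3")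
      case True
      have "H K L a b \<le> L*b^3" unfolding H_def by simp
      then show ?thesis using True by (simp add: algebra_simps)
    next
      case F2: False
      then have e: "H K L a b' = a^2*b'" and le: "a^2*b' \<le> L*b'^3" using F1 unfolding H_def by (auto simp: min_def split: if_splits)
      have "H K L a b \<le> a^2*b" unfolding H_def by simp
      moreover have "a^2*b - a^2*b' \<le> L*(b^3-b'^3)"
      proof (cases "b' = 0")
        case True then show ?thesis using e F2 by simp
      next
        case False
        then have "a^2 \<le> L*b'^2" using le assms
          by (smt (verit) mult.commute mult.left_commute mult_le_cancel_left_pos power2_eq_square power3_eq_cube zero_less_power)
        then have "a^2*(b-b') \<le> L*b'^2*(b-b')"
          using assms by (intro mult_right_mono) auto
        also have "\<dots> = (L*(b-b'))*(b'^2)" by (simp add: algebra_simps)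
        also have "\<dots> \<le> (L*(b-b'))*(b^2+b*b'+b'^2)"
          using assms by (intro mult_left_mono) (auto simp: power2_eq_square algebra_simps)
        finally have X: "a^2*(b-b') \<le> L*(b-b')*(b^2+b*b'+b'^2)" .
        have e1: "a^2*b - a^2*b' = a^2*(b-b')" by (simp add: algebra_simps)
        have e2: "L*(b^3-b'^3) = L*(b-b')*(b^2+b*b'+b'^2)" by (simp add: power2_eq_square power3_eq_cube algebra_simps)
        show ?thesis using X e1 e2 by linarith
      qed
      ultimately show ?thesis using e by linarith
    qed
  qed
  moreover have "H K L a b' \<le> H K L a b" using m1 m2 unfolding H_def by (auto simp: min_def)
  ultimately show ?thesis by simp
qed

lemma H_lip_a:
  assumes "0 \<le> a" "0 \<le> a'" "0 \<le> b" "0 < K"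
  shows "\<bar>H K L a b - H K L a' b\<bar> \<le> K * \<bar>a^3 - a'^3\<bar>"
proof (cases "a' \<le> a")
  case True
  have "a'^3 \<le> a^3" using True assms by (intro power_mono) auto
  then show ?thesis using H_mono_a[OF assms(2) True assms(3,4), of L] by simp
next
  case False
  have "a^3 \<le> a'^3" using False assms by (intro power_mono) auto
  then show ?thesis using H_mono_a[OF assms(1) _ assms(3,4), of a' L] False by simp
qed

lemma H_lip_b:
  assumes "0 \<le> b" "0 \<le> b'" "0 \<le> a" "0 < L"
  shows "\<bar>H K L a b - H K L a b'\<bar> \<le> L * \<bar>b^3 - b'^3\<bar>"
proof (cases "b' \<le> b")
  case True
  have "b'^3 \<le> b^3" using True assms by (intro power_mono) auto
  then show ?thesis using H_mono_b[OF assms(2) True assms(3,4), of K] by simp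
next
  case False
  have "b^3 \<le> b'^3" using False assms by (intro power_mono) auto
  then show ?thesis using H_mono_b[OF assms(1) _ assms(3,4), of b' K] False by simp
qed

lemma H_nonneg: "0 \<le> a \<Longrightarrow> 0 \<le> b \<Longrightarrow> 0 < K \<Longrightarrow> 0 < L \<Longrightarrow> 0 \<le> H K L a b"
proof -
  assume "0 \<le> a" "0 \<le> b" "0 < K" "0 < L"
  then have "0 \<le> a^2*b" "0 \<le> K*a^3" "0 \<le> L*b^3" by (auto intro!: mult_nonneg_nonneg)
  then show ?thesis by (simp add: H_def)
qed

lemma H_b0: "0 \<le> a \<Longrightarrow> 0 < K \<Longrightarrow> H K L a 0 = 0" unfolding H_def by (simp add: min_def)

lemma Adelta_pos: "0 < K \<Longrightarrow> 0 \<le> q \<Longrightarrow> Adelta K L p q = H K L (root 3 \<bar>p\<bar>) (root 3 \<bar>q\<bar>)"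
  by (cases "q = 0") (auto simp: Adelta_rep H_b0 real_root_ge_zero)

lemma Adelta_neg: "0 < K \<Longrightarrow> q \<le> 0 \<Longrightarrow> Adelta K L p q = - H K L (root 3 \<bar>p\<bar>) (root 3 \<bar>q\<bar>)"
  by (cases "q = 0") (auto simp: Adelta_rep H_b0 real_root_ge_zero)

lemma lip_p:
  assumes "0 < K"
  shows "\<bar>Adelta K L p q - Adelta K L p' q\<bar> \<le> K * \<bar>p - p'\<bar>"
proof -
  have "\<bar>Adelta K L p q - Adelta K L p' q\<bar> = \<bar>sgn q\<bar> * \<bar>H K L (root 3 \<bar>p\<bar>) (root 3 \<bar>q\<bar>) - H K L (root 3 \<bar>p'\<bar>) (root 3 \<bar>q\<bar>)\<bar>"
    unfolding Adelta_rep right_diff_distrib[symmetric] by (rule abs_mult)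
  also have "\<dots> \<le> 1 * \<bar>H K L (root 3 \<bar>p\<bar>) (root 3 \<bar>q\<bar>) - H K L (root 3 \<bar>p'\<bar>) (root 3 \<bar>q\<bar>)\<bar>"
    by (intro mult_right_mono) (auto simp: sgn_real_def)
  also have "\<dots> \<le> K * \<bar>(root 3 \<bar>p\<bar>)^3 - (root 3 \<bar>p'\<bar>)^3\<bar>"
    using H_lip_a[of "root 3 \<bar>p\<bar>" "root 3 \<bar>p'\<bar>" "root 3 \<bar>q\<bar>" K L] assms by simp
  also have "\<dots> = K * \<bar>\<bar>p\<bar> - \<bar>p'\<bar>\<bar>" by simp
  also have "\<dots> \<le> K * \<bar>p - p'\<bar>" using assms by (intro mult_left_mono) auto
  finally show ?thesis .
qed

lemma lip_q:
  assumes "0 < K" "0 < L"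
  shows "\<bar>Adelta K L p q - Adelta K L p q'\<bar> \<le> L * \<bar>q - q'\<bar>"
proof -
  define a where "a = root 3 \<bar>p\<bar>"
  define b where "b = root 3 \<bar>q\<bar>"
  define b' where "b' = root 3 \<bar>q'\<bar>"
  have a0: "0 \<le> a" and b0: "0 \<le> b" and b'0: "0 \<le> b'" by (auto simp: a_def b_def b'_def)
  have hb: "H K L a b \<le> L * \<bar>q\<bar>" unfolding H_def b_def by simp
  have hb': "H K L a b' \<le> L * \<bar>q'\<bar>" unfolding H_def b'_def by simp
  have l: "\<bar>H K L a b - H K L a b'\<bar> \<le> L * \<bar>\<bar>q\<bar> - \<bar>q'\<bar>\<bar>"
    using H_lip_b[OF b0 b'0 a0 assms(2), of K] by (simp add: b_def b'_def)
  have n1: "0 \<le> H K L a b" and n2: "0 \<le> H K L a b'" using H_nonneg a0 b0 b'0 assms by auto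
  show ?thesis
  proof (cases "0 \<le> q")
    case q: True
    show ?thesis
    proof (cases "0 \<le> q'")
      case True
      then show ?thesis using l q Adelta_pos[OF assms(1), of q L p] Adelta_pos[OF assms(1), of q' L p]
        by (simp add: a_def b_def b'_def)
    next
      case False
      have "\<bar>H K L a b + H K L a b'\<bar> \<le> L*\<bar>q\<bar> + L*\<bar>q'\<bar>" using n1 n2 hb hb' by simp
      also have "\<dots> = L * \<bar>q - q'\<bar>" using q False by (simp add: algebra_simps)
      finally show ?thesis using q False Adelta_pos[OF assms(1), of q L p] Adelta_neg[OF assms(1), of q' L p]
        by (simp add: a_def b_def b'_def)
    qed
  next
    case q: False
    show ?thesis
    proof (cases "0 \<le> q'")
      case True
      have "\<bar>- H K L a b - H K L a b'\<bar> \<le> L*\<bar>q\<bar> + L*\<bar>q'\<bar>" using n1 n2 hb hb' by simp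
      also have "\<dots> = L * \<bar>q - q'\<bar>" using q True by (simp add: algebra_simps)
      finally show ?thesis using q True Adelta_neg[OF assms(1), of q L p] Adelta_pos[OF assms(1), of q' L p]
        by (simp add: a_def b_def b'_def)
    next
      case False
      have "\<bar>- H K L a b - - H K L a b'\<bar> \<le> L * \<bar>\<bar>q\<bar> - \<bar>q'\<bar>\<bar>" using l by simp
      then show ?thesis using q False Adelta_neg[OF assms(1), of q L p] Adelta_neg[OF assms(1), of q' L p]
        by (simp add: a_def b_def b'_def abs_minus_commute)
    qed
  qed
qed

lemma deriv_bound:
  fixes f :: "real \<Rightarrow> real"
  assumes "(f has_real_derivative D) (at x)" "\<And>y. \<bar>f y - f x\<bar> \<le> M * \<bar>y - x\<bar>"
  shows "\<bar>D\<bar> \<le> M"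
proof -
  have "(\<lambda>h. (f (x+h) - f x) / h) \<midarrow>0\<rightarrow> D" using assms(1) by (simp add: DERIV_def)
  then have t: "((\<lambda>h. \<bar>(f (x+h) - f x) / h\<bar>) \<longlongrightarrow> \<bar>D\<bar>) (at 0)" by (rule tendsto_rabs)
  have "eventually (\<lambda>h. \<bar>(f (x+h) - f x) / h\<bar> \<le> M) (at (0::real))"
    unfolding eventually_at_filter
  proof (intro always_eventually allI impI)
    fix h :: real assume "h \<noteq> 0"
    then show "\<bar>(f (x+h) - f x) / h\<bar> \<le> M" using assms(2)[of "x+h"]
      by (simp add: abs_divide divide_le_eq)
  qed
  then show ?thesis using tendsto_upperbound[OF t] by simp
qed

lemma err_bound:
  assumes "0 < K" "0 < L"
  shows "\<bar>Adelta K L p q - A p q\<bar> \<le> max (4 / (27 * K^2) * \<bar>q\<bar>) (2 / (3 * sqrt (3 * L)) * \<bar>p\<bar>)"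
proof -
  define a where "a = root 3 \<bar>p\<bar>"
  define b where "b = root 3 \<bar>q\<bar>"
  have a0: "0 \<le> a" and b0: "0 \<le> b" by (auto simp: a_def b_def)
  have pa: "\<bar>p\<bar> = a^3" and qb: "\<bar>q\<bar> = b^3" by (auto simp: a_def b_def)
  have Hle: "H K L a b \<le> a^2*b" unfolding H_def by simp
  have eq: "\<bar>Adelta K L p q - A p q\<bar> = a^2*b - H K L a b"
  proof (cases "0 \<le> q")
    case True then show ?thesis using Hle Adelta_pos[OF assms(1), of q L p] A_rep[of p q]
      by (cases "q = 0") (auto simp: a_def b_def)
  next
    case False then show ?thesis using Hle Adelta_neg[OF assms(1), of q L p] A_rep[of p q]
      by (auto simp: a_def b_def)
  qed
  have "a^2*b - H K L a b \<le> max (4 / (27 * K^2) * b^3) (2 / (3 * sqrt (3 * L)) * a^3)"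
  proof (cases "H K L a b = a^2*b")
    case True
    have "0 \<le> 4 / (27 * K^2) * b^3" using b0 by simp
    then show ?thesis using True by linarith
  next
    case F1: False
    show ?thesis
    proof (cases "H K L a b = K*a^3")
      case True
      define x where "x = K*a"
      have x0: "0 \<le> x" using assms a0 by (simp add: x_def)
      have "0 \<le> (3*x - 2*b)^2*(3*x+b)" using x0 b0 by simp
      then have "27 * x^2 * b - 27*x^3 \<le> 4*b^3"
        by (simp add: power2_eq_square power3_eq_cube algebra_simps)
      then have "27*K^2*(a^2*b - K*a^3) \<le> 4*b^3"
        by (simp add: x_def power2_eq_square power3_eq_cube algebra_simps)
      then have "a^2*b - K*a^3 \<le> 4 / (27 * K^2) * b^3" using assms
        by (simp add: field_simps)
      then show ?thesis using True by simp
    next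
      case False
      then have True: "H K L a b = L*b^3" using F1 unfolding H_def by (auto simp: min_def split: if_splits)
      define sq where "sq = sqrt (3*L)"
      have sq0: "0 < sq" using assms by (simp add: sq_def)
      have sq2: "sq^2 = 3*L" using assms by (simp add: sq_def)
      define y where "y = sq * b"
      have y0: "0 \<le> y" using sq0 b0 by (simp add: y_def)
      have "0 \<le> (a - y)^2*(2*a+y)" using y0 a0 by simp
      then have "3*a^2*y - y^3 \<le> 2*a^3"
        by (simp add: power2_eq_square power3_eq_cube algebra_simps)
      moreover have Y: "y^3 = 3*L * sq * b^3" using sq2 by (simp add: y_def power3_eq_cube power2_eq_square algebra_simps)
      moreover have "3*a^2*y - y^3 = 3 * sq * (a^2*b - L*b^3)" unfolding Y by (simp add: y_def algebra_simps)
      ultimately have "3 * sq * (a^2*b - L*b^3) \<le> 2*a^3" by linarith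
      then have "a^2*b - L*b^3 \<le> 2 / (3 * sq) * a^3" using sq0
        by (simp add: field_simps)
      then show ?thesis using True by (simp add: sq_def)
    qed
  qed
  then show ?thesis using eq pa qb by simp
qed

theorem mainTheorem9:
  fixes K L :: real
  assumes "K > 0" and "L > 0" and "K * sqrt L \<ge> 1"
  shows "(\<forall>p q D. ((\<lambda>x. Adelta K L x q) has_real_derivative D) (at p) \<longrightarrow> \<bar>D\<bar> \<le> K)
       \<and> (\<forall>p q D. ((\<lambda>y. Adelta K L p y) has_real_derivative D) (at q) \<longrightarrow> \<bar>D\<bar> \<le> L)
       \<and> (\<exists>C. C-lipschitz_on UNIV (\<lambda>(p, q). Adelta K L p q))
       \<and> (\<forall>p q. \<bar>Adelta K L p q - A p q\<bar>
                  \<le> max (4 / (27 * K^2) * \<bar>q\<bar>) (2 / (3 * sqrt (3 * L)) * \<bar>p\<bar>))"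
proof (intro conjI allI impI)
  fix p q D assume "((\<lambda>x. Adelta K L x q) has_real_derivative D) (at p)"
  then show "\<bar>D\<bar> \<le> K" by (rule deriv_bound) (rule lip_p[OF assms(1)])
next
  fix p q D assume "((\<lambda>y. Adelta K L p y) has_real_derivative D) (at q)"
  then show "\<bar>D\<bar> \<le> L" by (rule deriv_bound) (rule lip_q[OF assms(1,2)])
next
  show "\<exists>C. C-lipschitz_on UNIV (\<lambda>(p, q). Adelta K L p q)"
  proof (intro exI lipschitz_onI)
    fix x y :: "real \<times> real"
    obtain p q where x: "x = (p, q)" by (cases x)
    obtain p' q' where y: "y = (p', q')" by (cases y)
    have d1: "\<bar>p - p'\<bar> \<le> dist x y" using real_sqrt_sum_squares_ge1[of "\<bar>p - p'\<bar>" "\<bar>q - q'\<bar>"]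
      by (simp add: x y dist_Pair_Pair dist_real_def)
    have d2: "\<bar>q - q'\<bar> \<le> dist x y" using real_sqrt_sum_squares_ge2[of "\<bar>p - p'\<bar>" "\<bar>q - q'\<bar>"]
      by (simp add: x y dist_Pair_Pair dist_real_def)
    have "\<bar>Adelta K L p q - Adelta K L p' q'\<bar> \<le> \<bar>Adelta K L p q - Adelta K L p' q\<bar> + \<bar>Adelta K L p' q - Adelta K L p' q'\<bar>"
      by linarith
    also have "\<dots> \<le> K * \<bar>p - p'\<bar> + L * \<bar>q - q'\<bar>"
      using lip_p[OF assms(1)] lip_q[OF assms(1,2)] by (intro add_mono) auto
    also have "\<dots> \<le> K * dist x y + L * dist x y"
      using d1 d2 assms by (intro add_mono mult_left_mono) auto
    finally show "dist ((\<lambda>(p, q). Adelta K L p q) x) ((\<lambda>(p, q). Adelta K L p q) y) \<le> (K + L) * dist x y"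
      by (simp add: x y dist_real_def algebra_simps)
  next
    show "0 \<le> K + L" using assms by simp
  qed
next
  fix p q show "\<bar>Adelta K L p q - A p q\<bar> \<le> max (4 / (27 * K^2) * \<bar>q\<bar>) (2 / (3 * sqrt (3 * L)) * \<bar>p\<bar>)"
    by (rule err_bound[OF assms(1,2)])
qed

end
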